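(* Assume (F) and (H), and let $\bar c=\lim_{\varepsilon\to0^+}c_\varepsilon^*$. Let $\varepsilon_n\to0^+$ be a sequence along which: - $v_{\varepsilon_n}\to\bar v$ uniformly on compact subsets of $\mathbb R$; - $y_{\varepsilon_n}\to\bar y$ uniformly on $[0,1]$. Assume that for some real numbers $z_0<z_1$ and some $v_0\in[0,1)$ one has $\bar v(z)=z-z_0+v_0$ for all $z\in[z_0,z_1]$, and set $v_1:=\bar v(z_1)\in(0,1]$, so that $z_1-z_0=v_1-v_0$. Then $\bar c=\frac{F(v_1)-F(v_0)-h(v_1)+h(v_0)}{v_1-v_0}+\frac{\bar y(v_1)-\bar y(v_0)}{v_1-v_0}$, where $F(v)=\int_0^v f(s)\,ds$.
   Context: Assumptions. - (F): $f\in C([0,1])$, $f(0)=f(1)=0$, $f(s)>0$ for $s\in(0,1)$, and there is $k>0$ with $f(s)\le ks$ and $f(s)\le k(1-s)$ for all $s\in[0,1]$. - (H): $h\in C^2([0,1])$ with $h(0)=h'(0)=0$. Problems and speeds. - For $\varepsilon>0$ and $c\in\mathbb R$, a front profile is a function $v$ with $|v'|<1$, $v(0)=1/2$, satisfying $\varepsilon\big(v'/\sqrt{1-(v')^2}\big)'-(c+h'(v))v'+f(v)=0$ on $\mathbb R$, $v(-\infty)=0$, $v(+\infty)=1$, $v'>0$. - It corresponds to the solution $y(v)=\varepsilon\big(1/\sqrt{1-v'(z(v))^2}-1\big)$, where $z(\cdot)$ is the inverse of $v$, of the first-order problem (P1): $y'=(c+h'(v))\frac{\sqrt{y(2\varepsilon+y)}}{\varepsilon+y}-f(v)$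 on $[0,1]$, $y(0)=y(1)=0$, $y>0$ on $(0,1)$. - $c$ is admissible if (P1) has a solution. The admissible speeds form $[c_\varepsilon^*,+\infty)$, and $c_\varepsilon^*$ (the critical speed) is nondecreasing in $\varepsilon$. - $v_\varepsilon$ is the critical profile (the front profile with $c=c_\varepsilon^*$, $v_\varepsilon(0)=1/2$), and $y_\varepsilon$ is its associated solution of (P1). *)

theory Defs
  imports "HOL-Analysis.Analysis"
begin

definition hypF :: "(real \<Rightarrow> real) \<Rightarrow> bool" where
  "hypF f \<longleftrightarrow> continuous_on {0..1} f \<and> f 0 = 0 \<and> f 1 = 0 \<and>
     (\<forall>s\<in>{0<..<1}. f s > 0) \<and>
     (\<exists>k>0. \<forall>s\<in>{0..1}. f s \<le> k * s \<and> f s \<le> k * (1 - s))"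

definition hypH :: "(real \<Rightarrow> real) \<Rightarrow> (real \<Rightarrow> real) \<Rightarrow> bool" where
  "hypH h dh \<longleftrightarrow> (\<exists>d2h. (\<forall>x\<in>{0..1}.
        (h has_real_derivative dh x) (at x within {0..1}) \<and>
        (dh has_real_derivative d2h x) (at x within {0..1})) \<and>
      continuous_on {0..1} d2h) \<and> h 0 = 0 \<and> dh 0 = 0"

definition front_profile ::
  "(real \<Rightarrow> real) \<Rightarrow> (real \<Rightarrow> real) \<Rightarrow> real \<Rightarrow> real \<Rightarrow> (real \<Rightarrow> real) \<Rightarrow> bool" where
  "front_profile f dh eps c v \<longleftrightarrow>
     (\<exists>w g. (\<forall>z. (v has_real_derivative w z) (at z)) \<and>
        (\<forall>z. \<bar>w z\<bar> < 1 \<and> w z > 0) \<and>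
        (\<forall>z. ((\<lambda>t. w t / sqrt (1 - (w t)\<^sup>2)) has_real_derivative g z) (at z)) \<and>
        (\<forall>z. eps * g z - (c + dh (v z)) * w z + f (v z) = 0)) \<and>
     v 0 = 1/2 \<and> (v \<longlongrightarrow> 0) at_bot \<and> (v \<longlongrightarrow> 1) at_top"

definition P1_sol ::
  "(real \<Rightarrow> real) \<Rightarrow> (real \<Rightarrow> real) \<Rightarrow> real \<Rightarrow> real \<Rightarrow> (real \<Rightarrow> real) \<Rightarrow> bool" where
  "P1_sol f dh eps c y \<longleftrightarrow>
     (\<forall>s\<in>{0..1}. (y has_real_derivative
         ((c + dh s) * sqrt (y s * (2 * eps + y s)) / (eps + y s) - f s)) (at s within {0..1})) \<and>
     y 0 = 0 \<and> y 1 = 0 \<and> (\<forall>s\<in>{0<..<1}. y s > 0)"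

definition admissible :: "(real \<Rightarrow> real) \<Rightarrow> (real \<Rightarrow> real) \<Rightarrow> real \<Rightarrow> real \<Rightarrow> bool" where
  "admissible f dh eps c \<longleftrightarrow> (\<exists>y. P1_sol f dh eps c y)"

definition crit_speed :: "(real \<Rightarrow> real) \<Rightarrow> (real \<Rightarrow> real) \<Rightarrow> real \<Rightarrow> real" where
  "crit_speed f dh eps = Inf {c. admissible f dh eps c}"

text \<open>Solution of (P1) associated with a front profile v:
  y(s) = eps (1/sqrt(1 - v'(z(s))^2) - 1), z the inverse of v; y(0)=y(1)=0.\<close>
definition assoc_y :: "real \<Rightarrow> (real \<Rightarrow> real) \<Rightarrow> real \<Rightarrow> real" where
  "assoc_y eps v s = (if s \<in> {0<..<1}
      then eps * (1 / sqrt (1 - (deriv v (inv v s))\<^sup>2) - 1) else 0)"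

definition primF :: "(real \<Rightarrow> real) \<Rightarrow> real \<Rightarrow> real" where
  "primF f v = integral {0..v} f"

end

theory Submission imports Defs begin

locale prof =
  fixes f h dh F :: "real \<Rightarrow> real" and eps c K :: real and v w g :: "real \<Rightarrow> real"
  assumes eps: "eps > 0"
  and vd: "\<And>z. (v has_real_derivative w z) (at z)"
  and wb: "\<And>z. \<bar>w z\<bar> < 1 \<and> w z > 0"
  and gd: "\<And>z. ((\<lambda>t. w t / sqrt (1 - (w t)\<^sup>2)) has_real_derivative g z) (at z)"
  and ode: "\<And>z. eps * g z - (c + dh (v z)) * w z + f (v z) = 0"
  and vbot: "(v \<longlongrightarrow> 0) at_bot" and vtop: "(v \<longlongrightarrow> 1) at_top"
  and hd: "\<And>x. x \<in> {0<..<1} \<Longrightarrow> (h has_real_derivative dh x) (at x)"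
  and Fd: "\<And>x. x \<in> {0<..<1} \<Longrightarrow> (F has_real_derivative f x) (at x)"
  and Kb: "\<And>x. x \<in> {0..1} \<Longrightarrow> \<bar>c\<bar> + \<bar>dh x\<bar> + \<bar>f x\<bar> \<le> K"
begin

lemma v_pos: "0 < v z"
  using DERIV_pos_imp_increasing_at_bot[of z v 0] vd wb vbot by blast

lemma v_lt1: "v z < 1"
proof -
  have "-1 < (\<lambda>x. - v x) z"
    apply (rule DERIV_neg_imp_decreasing_at_top[of z])
    using vd wb apply (metis DERIV_minus neg_less_0_iff_less)
    using vtop tendsto_minus by blast
  then show ?thesis by simp
qed

lemma v_mono: "a < b \<Longrightarrow> v a < v b"
  using DERIV_pos_imp_increasing[of a b v] vd wb by blast

definition Yp where "Yp = (\<lambda>z. eps * (1 / sqrt (1 - (w z)\<^sup>2) - 1))"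

lemma Y_deriv: "(Yp has_real_derivative w z * ((c + dh (v z)) * w z - f (v z))) (at z)"
proof -
  define \<phi> where "\<phi> = (\<lambda>t. w t / sqrt (1 - (w t)\<^sup>2))"
  have pos: "1 - (w t)\<^sup>2 > 0" for t using wb[of t] by (auto simp: abs_square_less_1 abs_less_iff)
  have eq: "sqrt (1 + (\<phi> t)\<^sup>2) = 1 / sqrt (1 - (w t)\<^sup>2)" for t
  proof -
    have "1 + (\<phi> t)\<^sup>2 = 1 / (1 - (w t)\<^sup>2)"
      using pos[of t] by (simp add: \<phi>_def power_divide field_simps)
    then show ?thesis by (simp add: real_sqrt_divide)
  qed
  have Yeq: "Yp = (\<lambda>t. eps * (sqrt (1 + (\<phi> t)\<^sup>2) - 1))"
    by (simp add: Yp_def eq)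
  have d: "((\<lambda>t. eps * (sqrt (1 + (\<phi> t)\<^sup>2) - 1)) has_real_derivative
      eps * (inverse (sqrt (1 + (\<phi> z)\<^sup>2)) / 2 * (2 * \<phi> z * g z))) (at z)"
    using gd[of z] unfolding \<phi>_def[symmetric]
    by (auto intro!: derivative_eq_intros simp: add_pos_nonneg) (smt (verit) zero_le_power2)+
  have "eps * (inverse (sqrt (1 + (\<phi> z)\<^sup>2)) / 2 * (2 * \<phi> z * g z)) = w z * (eps * g z)"
    using pos[of z] by (simp add: eq \<phi>_def field_simps real_sqrt_divide)
  also have "\<dots> = w z * ((c + dh (v z)) * w z - f (v z))"
  proof -
    have "eps * g z = (c + dh (v z)) * w z - f (v z)" using ode[of z] by linarith
    then show ?thesis by (simp only:)
  qed
  finally show ?thesis using d Yeq by simp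
qed

lemma w_lt1: "w z < 1" using wb[of z] by auto

lemma sq_pos: "1 - (w t)\<^sup>2 > 0" using wb[of t] by (auto simp: abs_square_less_1 abs_less_iff)

lemma Y_nonneg: "Yp z \<ge> 0"
proof -
  have "sqrt (1 - (w z)\<^sup>2) \<le> 1" by simp
  moreover have "sqrt (1 - (w z)\<^sup>2) > 0" using sq_pos by simp
  ultimately have "1 / sqrt (1 - (w z)\<^sup>2) \<ge> 1" by (simp add: field_simps)
  then show ?thesis unfolding Yp_def using eps by simp
qed

lemma K_bound: "\<bar>(c + dh (v z)) * w z - f (v z)\<bar> \<le> K"
proof -
  have vz: "v z \<in> {0..1}" using v_pos[of z] v_lt1[of z] by auto
  have "\<bar>(c + dh (v z)) * w z\<bar> \<le> \<bar>c + dh (v z)\<bar>"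
    using w_lt1[of z] wb[of z] mult_left_le[of "w z" "\<bar>c + dh (v z)\<bar>"] by (simp add: abs_mult)
  also have "\<dots> \<le> \<bar>c\<bar> + \<bar>dh (v z)\<bar>" by simp
  finally show ?thesis using Kb[OF vz] by linarith
qed

lemma cdh_bound: "\<bar>c + dh (v z)\<bar> \<le> K"
proof -
  have vz: "v z \<in> {0..1}" using v_pos[of z] v_lt1[of z] by auto
  show ?thesis using Kb[OF vz] by linarith
qed

lemma Y_lip: assumes "a \<le> b" shows "\<bar>Yp b - Yp a\<bar> \<le> K * (v b - v a)"
proof -
  have "(\<lambda>t. K * v t - Yp t) a \<le> (\<lambda>t. K * v t - Yp t) b"
  proof (rule DERIV_nonneg_imp_nondecreasing[OF assms])
    fix x show "\<exists>y. ((\<lambda>t. K * v t - Yp t) has_real_derivative y) (at x) \<and> 0 \<le> y"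
      apply (rule exI[of _ "K * w x - w x * ((c + dh (v x)) * w x - f (v x))"])
      apply (intro conjI)
       apply (auto intro!: derivative_eq_intros vd Y_deriv)[1]
      using K_bound[of x] wb[of x] mult_nonneg_nonneg[of "w x" "K - ((c + dh (v x)) * w x - f (v x))"]
      by (auto simp: algebra_simps abs_le_iff)
  qed
  moreover have "(\<lambda>t. K * v t + Yp t) a \<le> (\<lambda>t. K * v t + Yp t) b"
  proof (rule DERIV_nonneg_imp_nondecreasing[OF assms])
    fix x show "\<exists>y. ((\<lambda>t. K * v t + Yp t) has_real_derivative y) (at x) \<and> 0 \<le> y"
      apply (rule exI[of _ "K * w x + w x * ((c + dh (v x)) * w x - f (v x))"])
      apply (intro conjI)
       apply (auto intro!: derivative_eq_intros vd Y_deriv)[1]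
      using K_bound[of x] wb[of x] mult_nonneg_nonneg[of "w x" "K + ((c + dh (v x)) * w x - f (v x))"]
      by (auto simp: algebra_simps abs_le_iff)
  qed
  ultimately show ?thesis by (auto simp: algebra_simps abs_le_iff)
qed

lemma w_big: assumes "\<delta> > 0" "Yp t > \<delta>" shows "w t > 1 - (1 / (1 + \<delta> / eps))\<^sup>2"
proof -
  define q where "q = 1 / (1 + \<delta> / eps)"
  have q: "0 < q" "q < 1" using assms eps by (auto simp: q_def field_simps)
  have sp: "sqrt (1 - (w t)\<^sup>2) > 0" using sq_pos by simp
  have "1 / sqrt (1 - (w t)\<^sup>2) > 1 + \<delta> / eps"
    using assms eps unfolding Yp_def by (simp add: field_simps)
  then have "sqrt (1 - (w t)\<^sup>2) < q"
    using sp eps assms unfolding q_def by (simp add: field_simps)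
  then have "sqrt (1 - (w t)\<^sup>2) ^ 2 < q ^ 2"
    by (rule power_strict_mono) (use sp in auto)
  then have "1 - (w t)\<^sup>2 < q\<^sup>2" using sq_pos[of t] by simp
  moreover have "(w t)\<^sup>2 \<le> w t" using wb[of t] w_lt1[of t] by (simp add: power2_eq_square mult_left_le)
  ultimately show ?thesis unfolding q_def[symmetric] by linarith
qed

lemma d2_pos: "\<delta> > 0 \<Longrightarrow> 1 - (1 / (1 + \<delta> / eps))\<^sup>2 > 0"
proof -
  assume d: "\<delta> > 0"
  have "0 < 1 / (1 + \<delta> / eps)" "1 / (1 + \<delta> / eps) < 1" using d eps by (auto simp: field_simps)
  then have "(1 / (1 + \<delta> / eps))\<^sup>2 < 1" by (simp add: power_less_one_iff)
  then show ?thesis by simp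
qed

lemma Y_le_bot: "Yp z \<le> K * v z"
proof (rule field_le_epsilon)
  fix \<delta> :: real assume d: "\<delta> > 0"
  show "Yp z \<le> K * v z + \<delta>"
  proof (rule ccontr)
    assume "\<not> ?thesis"
    then have A: "Yp z > K * v z + \<delta>" by simp
    define d2 where "d2 = 1 - (1 / (1 + \<delta> / eps))\<^sup>2"
    have d2: "d2 > 0" using d2_pos[OF d] by (simp add: d2_def)
    have wl: "w t > d2" if "t \<le> z" for t
    proof -
      have "Yp z - Yp t \<le> K * v z - K * v t" using Y_lip[OF that] by (auto simp: right_diff_distrib abs_le_iff)
      moreover have "K * v t \<ge> 0" using Kb[of 0] v_pos[of t] by simp
      ultimately have "Yp t > \<delta>" using A by linarith
      then show ?thesis using w_big[OF d] d2_def by blast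
    qed
    define T where "T = v z / d2 + 1"
    have T: "T > 0" using v_pos[of z] d2 unfolding T_def by (smt (verit) divide_pos_pos)
    have "(\<lambda>t. v t - d2 * t) (z - T) \<le> (\<lambda>t. v t - d2 * t) z"
    proof (rule DERIV_nonneg_imp_nondecreasing[of "z - T" z "\<lambda>t. v t - d2 * t"])
      show "z - T \<le> z" using T by simp
      fix x assume "z - T \<le> x" "x \<le> z"
      then show "\<exists>y. ((\<lambda>t. v t - d2 * t) has_real_derivative y) (at x) \<and> 0 \<le> y"
        using wl[of x] by (intro exI[of _ "w x - d2"]) (auto intro!: derivative_eq_intros vd)
    qed
    then have "v (z - T) \<le> v z - d2 * T" by (simp add: algebra_simps)
    also have "\<dots> = - d2" using d2 by (simp add: T_def field_simps)
    finally show False using v_pos[of "z - T"] d2 by simp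
  qed
qed

lemma Y_le_top: "Yp z \<le> K * (1 - v z)"
proof (rule field_le_epsilon)
  fix \<delta> :: real assume d: "\<delta> > 0"
  show "Yp z \<le> K * (1 - v z) + \<delta>"
  proof (rule ccontr)
    assume "\<not> ?thesis"
    then have A: "Yp z > K * (1 - v z) + \<delta>" by simp
    define d2 where "d2 = 1 - (1 / (1 + \<delta> / eps))\<^sup>2"
    have d2: "d2 > 0" using d2_pos[OF d] by (simp add: d2_def)
    have wl: "w t > d2" if "z \<le> t" for t
    proof -
      have "Yp z - Yp t \<le> K * v t - K * v z" using Y_lip[OF that] by (auto simp: right_diff_distrib abs_le_iff)
      moreover have "K * (1 - v t) \<ge> 0" using Kb[of 0] v_lt1[of t] by simp
      ultimately have "Yp t > \<delta>" using A by (simp add: right_diff_distrib)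
      then show ?thesis using w_big[OF d] d2_def by blast
    qed
    define T where "T = 1 / d2 + 1"
    have T: "T > 0" using d2 unfolding T_def by (smt (verit) divide_pos_pos)
    have "(\<lambda>t. v t - d2 * t) z \<le> (\<lambda>t. v t - d2 * t) (z + T)"
    proof (rule DERIV_nonneg_imp_nondecreasing[of z "z + T" "\<lambda>t. v t - d2 * t"])
      show "z \<le> z + T" using T by simp
      fix x assume "z \<le> x" "x \<le> z + T"
      then show "\<exists>y. ((\<lambda>t. v t - d2 * t) has_real_derivative y) (at x) \<and> 0 \<le> y"
        using wl[of x] by (intro exI[of _ "w x - d2"]) (auto intro!: derivative_eq_intros vd)
    qed
    then have "v (z + T) \<ge> v z + d2 * T" by (simp add: algebra_simps)
    moreover have "d2 * T = 1 + d2" using d2 by (simp add: T_def field_simps)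
    ultimately show False using v_pos[of z] v_lt1[of "z + T"] d2 by simp
  qed
qed

lemma G_est:
  assumes "a \<le> b"
  shows "\<bar>(Yp b - c * v b - h (v b) + F (v b)) - (Yp a - c * v a - h (v a) + F (v a))\<bar>
          \<le> K * ((b - a) - (v b - v a))"
proof -
  define G where "G = (\<lambda>t. Yp t - c * v t - h (v t) + F (v t))"
  define G' where "G' = (\<lambda>x. w x * ((c + dh (v x)) * w x - f (v x)) - c * w x - dh (v x) * w x + f (v x) * w x)"
  have vin: "v x \<in> {0<..<1}" for x using v_pos v_lt1 by auto
  have Gd: "(G has_real_derivative G' x) (at x)" for x
    unfolding G_def G'_def
    by (auto intro!: derivative_eq_intros Y_deriv vd DERIV_chain2[OF hd[OF vin] vd] DERIV_chain2[OF Fd[OF vin] vd] simp: algebra_simps)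
  have Gb: "\<bar>G' x\<bar> \<le> K * (1 - w x)" for x
  proof -
    have "G' x = - ((c + dh (v x)) * (w x * (1 - w x)))" unfolding G'_def by (simp add: algebra_simps)
    then have "\<bar>G' x\<bar> = \<bar>c + dh (v x)\<bar> * (w x * (1 - w x))"
      using wb[of x] w_lt1[of x] by (simp add: abs_mult)
    also have "\<dots> \<le> K * (w x * (1 - w x))"
      by (rule mult_right_mono[OF cdh_bound]) (use wb[of x] w_lt1[of x] in simp)
    also have "\<dots> \<le> K * (1 - w x)"
      apply (rule mult_left_mono)
      using wb[of x] w_lt1[of x] Kb[of 0] by (auto simp: mult_left_le_one_le)
    finally show ?thesis .
  qed
  have m1: "(\<lambda>t. K * (t - v t) - G t) a \<le> (\<lambda>t. K * (t - v t) - G t) b"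
  proof (rule DERIV_nonneg_imp_nondecreasing[of a b "\<lambda>t. K * (t - v t) - G t"])
    fix x show "\<exists>y. ((\<lambda>t. K * (t - v t) - G t) has_real_derivative y) (at x) \<and> 0 \<le> y"
      apply (rule exI[of _ "K * (1 - w x) - G' x"])
      using Gb[of x] by (auto intro!: derivative_eq_intros vd Gd)
  qed (rule assms)
  have m2: "(\<lambda>t. K * (t - v t) + G t) a \<le> (\<lambda>t. K * (t - v t) + G t) b"
  proof (rule DERIV_nonneg_imp_nondecreasing[of a b "\<lambda>t. K * (t - v t) + G t"])
    fix x show "\<exists>y. ((\<lambda>t. K * (t - v t) + G t) has_real_derivative y) (at x) \<and> 0 \<le> y"
      apply (rule exI[of _ "K * (1 - w x) + G' x"])
      using Gb[of x] by (auto intro!: derivative_eq_intros vd Gd)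
  qed (rule assms)
  have "\<bar>G b - G a\<bar> \<le> K * ((b - a) - (v b - v a))" using m1 m2 by (simp add: abs_le_iff algebra_simps)
  then show ?thesis by (simp add: G_def)
qed

lemma inj_v: "inj v"
  by (metis injI linorder_neqE_linordered_idom v_mono order_less_irrefl)

lemma assoc_at: "assoc_y eps v (v z) = Yp z"
proof -
  have "v z \<in> {0<..<1}" using v_pos v_lt1 by auto
  moreover have "inv v (v z) = z" using inj_v by (simp add: inv_f_f)
  moreover have "deriv v z = w z" using vd DERIV_imp_deriv by blast
  ultimately show ?thesis unfolding assoc_y_def Yp_def by simp
qed

lemma v_surj: assumes "s \<in> {0<..<1}" shows "\<exists>z. v z = s"
proof -
  have "\<forall>\<^sub>F x in at_bot. v x < s" using vbot assms by (auto intro: order_tendstoD)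
  then obtain a where a: "v a < s" by (auto simp: eventually_at_bot_linorder)
  have "\<forall>\<^sub>F x in at_top. v x > s" using vtop assms by (auto intro: order_tendstoD)
  then obtain b where b: "v b > s" by (auto simp: eventually_at_top_linorder)
  have ab: "a \<le> b" using a b v_mono[of b a] by (cases "a \<le> b") auto
  have "continuous_on {a..b} v"
    using vd by (intro continuous_at_imp_continuous_on) (auto intro: DERIV_isCont)
  then show ?thesis using IVT'[of v a s b] a b ab by auto
qed

lemma assoc_bounds: assumes "s \<in> {0..1}"
  shows "0 \<le> assoc_y eps v s \<and> assoc_y eps v s \<le> K * s \<and> assoc_y eps v s \<le> K * (1 - s)"
proof (cases "s \<in> {0<..<1}")
  case True
  then obtain z where z: "v z = s" using v_surj by blast
  show ?thesis using assoc_at[of z] Y_nonneg[of z] Y_le_bot[of z] Y_le_top[of z] z by simp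
next
  case False
  then show ?thesis using assms Kb[of 0] by (auto simp: assoc_y_def)
qed

lemma assoc_lip_aux: assumes "s \<in> {0..1}" "t \<in> {0..1}" "s \<le> t"
  shows "\<bar>assoc_y eps v t - assoc_y eps v s\<bar> \<le> K * (t - s)"
proof -
  consider "s = 0" | "t = 1" | "s \<in> {0<..<1} \<and> t \<in> {0<..<1}" using assms by force
  then show ?thesis
  proof cases
    case 1 then show ?thesis using assoc_bounds[OF assms(2)] by (simp add: assoc_y_def)
  next
    case 2 then show ?thesis using assoc_bounds[OF assms(1)] by (simp add: assoc_y_def)
  next
    case 3
    then obtain a b where a: "v a = s" and b: "v b = t" using v_surj by blast
    have "a \<le> b" using a b v_mono[of b a] assms(3) by (cases "a \<le> b") auto
    then show ?thesis using Y_lip[of a b] assoc_at[of a] assoc_at[of b] a b by simp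
  qed
qed

lemma assoc_lip: assumes "s \<in> {0..1}" "t \<in> {0..1}"
  shows "\<bar>assoc_y eps v t - assoc_y eps v s\<bar> \<le> K * \<bar>t - s\<bar>"
proof (cases "s \<le> t")
  case True then show ?thesis using assoc_lip_aux[OF assms True] by simp
next
  case False then show ?thesis using assoc_lip_aux[OF assms(2,1)] by (simp add: abs_minus_commute)
qed

end

theorem proposition3:
  fixes f h dh :: "real \<Rightarrow> real" and cbar :: real
    and eps :: "nat \<Rightarrow> real" and v :: "nat \<Rightarrow> real \<Rightarrow> real"
    and vbar ybar :: "real \<Rightarrow> real" and z0 z1 v0 :: real
  assumes F: "hypF f"
    and H: "hypH h dh"
    and cbar: "(crit_speed f dh \<longlongrightarrow> cbar) (at_right 0)"
    and eps_pos: "\<And>n. eps n > 0"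
    and eps_lim: "eps \<longlonglongrightarrow> 0"
    and crit: "\<And>n. front_profile f dh (eps n) (crit_speed f dh (eps n)) (v n)"
    and v_conv: "\<And>K. compact K \<Longrightarrow> uniform_limit K v vbar sequentially"
    and y_conv: "uniform_limit {0..1} (\<lambda>n. assoc_y (eps n) (v n)) ybar sequentially"
    and z01: "z0 < z1"
    and v0: "0 \<le> v0" "v0 < 1"
    and lin: "\<And>z. z \<in> {z0..z1} \<Longrightarrow> vbar z = z - z0 + v0"
  shows "cbar = (primF f (vbar z1) - primF f v0 - h (vbar z1) + h v0) / (vbar z1 - v0)
               + (ybar (vbar z1) - ybar v0) / (vbar z1 - v0)"
proof -
  define c where "c = (\<lambda>n. crit_speed f dh (eps n))"
  define Fp where "Fp = primF f"
  from H obtain d2h where hder: "\<And>x. x \<in> {0..1} \<Longrightarrow> (h has_real_derivative dh x) (at x within {0..1})"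
      and dhder: "\<And>x. x \<in> {0..1} \<Longrightarrow> (dh has_real_derivative d2h x) (at x within {0..1})"
    unfolding hypH_def by blast
  have fcont: "continuous_on {0..1} f" using F unfolding hypF_def by blast
  have Fder: "\<And>x. x \<in> {0..1} \<Longrightarrow> (Fp has_real_derivative f x) (at x within {0..1})"
    unfolding Fp_def primF_def has_real_derivative_iff_has_vector_derivative
    by (rule integral_has_vector_derivative[OF fcont])
  have hcont: "continuous_on {0..1} h" by (rule DERIV_continuous_on[OF hder])
  have dhcont: "continuous_on {0..1} dh" by (rule DERIV_continuous_on[OF dhder])
  have Fcont: "continuous_on {0..1} Fp" by (rule DERIV_continuous_on[OF Fder])
  have hd: "(h has_real_derivative dh x) (at x)" if "x \<in> {0<..<1}" for x
    using hder[of x] that at_within_interior[of x "{0..1::real}"] by auto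
  have Fd: "(Fp has_real_derivative f x) (at x)" if "x \<in> {0<..<1}" for x
    using Fder[of x] that at_within_interior[of x "{0..1::real}"] by auto
  obtain Dm where Dm: "\<And>x. x \<in> {0..1} \<Longrightarrow> \<bar>dh x\<bar> \<le> Dm"
    using compact_imp_bounded[OF compact_continuous_image[OF dhcont compact_Icc]]
    unfolding bounded_iff by fastforce
  obtain Fm where Fm: "\<And>x. x \<in> {0..1} \<Longrightarrow> \<bar>f x\<bar> \<le> Fm"
    using compact_imp_bounded[OF compact_continuous_image[OF fcont compact_Icc]]
    unfolding bounded_iff by fastforce
  have epsF: "filterlim eps (at_right 0) sequentially"
    using eps_lim eps_pos by (auto simp: filterlim_at intro!: always_eventually) (metis eps_pos less_irrefl)
  have c_lim: "c \<longlonglongrightarrow> cbar"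
    unfolding c_def using filterlim_compose[OF cbar epsF] by (simp add: o_def)
  obtain B where B: "\<And>n. \<bar>c n\<bar> \<le> B"
  proof -
    have "Bseq c" using convergent_imp_Bseq[of c] c_lim by (auto simp: convergent_def)
    then show ?thesis using that by (metis BseqE real_norm_def)
  qed
  define K where "K = B + Dm + Fm"
  have Kb: "\<bar>c n\<bar> + \<bar>dh x\<bar> + \<bar>f x\<bar> \<le> K" if "x \<in> {0..1}" for n x
    using B[of n] Dm[OF that] Fm[OF that] by (simp add: K_def)
  define Q where "Q = (\<lambda>n w g. (\<forall>z. (v n has_real_derivative w z) (at z)) \<and>
        (\<forall>z. \<bar>w z\<bar> < 1 \<and> w z > 0) \<and>
        (\<forall>z. ((\<lambda>t. w t / sqrt (1 - (w t)\<^sup>2)) has_real_derivative g z) (at z)) \<and>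
        (\<forall>z. eps n * g z - (c n + dh (v n z)) * w z + f (v n z) = (0::real)))"
  have "\<forall>n. \<exists>w g. Q n w g"
    using crit unfolding front_profile_def c_def Q_def by blast
  then have "\<exists>W. \<forall>n. \<exists>g. Q n (W n) g" by (rule choice)
  then obtain W where "\<forall>n. \<exists>g. Q n (W n) g" by blast
  then have "\<exists>Gg. \<forall>n. Q n (W n) (Gg n)" by (rule choice)
  then obtain Gg where WG0: "\<And>n. Q n (W n) (Gg n)" by blast
  note WG = WG0[unfolded Q_def]
  have lims: "\<And>n. (v n \<longlongrightarrow> 0) at_bot \<and> (v n \<longlongrightarrow> 1) at_top"
    using crit unfolding front_profile_def by blast
  have P: "prof f h dh Fp (eps n) (c n) K (v n) (W n) (Gg n)" for n
    apply unfold_locales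
    using WG[of n] by (simp_all add: eps_pos lims hd Fd Kb)
  define A where "A = (\<lambda>n. assoc_y (eps n) (v n))"
  have vconv: "(\<lambda>n. v n z) \<longlonglongrightarrow> vbar z" for z
    using tendsto_uniform_limitI[OF v_conv[of "{z}"]] by simp
  have vbar01: "vbar z \<in> {0..1}" for z
  proof -
    have "vbar z \<ge> 0" by (rule tendsto_lowerbound[OF vconv]) (use prof.v_pos[OF P] in \<open>auto intro!: always_eventually less_imp_le\<close>)
    moreover have "vbar z \<le> 1" by (rule tendsto_upperbound[OF vconv]) (use prof.v_lt1[OF P] in \<open>auto intro!: always_eventually less_imp_le\<close>)
    ultimately show ?thesis by simp
  qed
  have vn01: "v n z \<in> {0..1}" for n z using prof.v_pos[OF P] prof.v_lt1[OF P] by (auto intro: less_imp_le)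
  have ylip: "\<bar>ybar t - ybar s\<bar> \<le> K * \<bar>t - s\<bar>" if "s \<in> {0..1}" "t \<in> {0..1}" for s t
  proof -
    have "(\<lambda>n. \<bar>A n t - A n s\<bar>) \<longlonglongrightarrow> \<bar>ybar t - ybar s\<bar>"
      unfolding A_def by (intro tendsto_intros tendsto_uniform_limitI[OF y_conv] that)
    then show ?thesis
      by (rule tendsto_upperbound) (use prof.assoc_lip[OF P that] in \<open>auto simp: A_def\<close>)
  qed
  have Aconv: "(\<lambda>n. A n (v n z)) \<longlonglongrightarrow> ybar (vbar z)" for z
  proof -
    have 1: "(\<lambda>n. A n (v n z) - ybar (v n z)) \<longlonglongrightarrow> 0"
    proof (rule tendstoI)
      fix e :: real assume e: "e > 0"
      show "\<forall>\<^sub>F n in sequentially. dist (A n (v n z) - ybar (v n z)) 0 < e"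
        using uniform_limitD[OF y_conv e]
        by eventually_elim (use vn01 in \<open>auto simp: A_def dist_real_def\<close>)
    qed
    have 2: "(\<lambda>n. ybar (v n z) - ybar (vbar z)) \<longlonglongrightarrow> 0"
    proof (rule Lim_null_comparison)
      show "\<forall>\<^sub>F n in sequentially. norm (ybar (v n z) - ybar (vbar z)) \<le> K * \<bar>v n z - vbar z\<bar>"
        using ylip[OF vbar01 vn01] by (auto simp: abs_minus_commute)
      have "(\<lambda>n. K * \<bar>v n z - vbar z\<bar>) \<longlonglongrightarrow> K * \<bar>vbar z - vbar z\<bar>"
        by (intro tendsto_intros vconv)
      then show "(\<lambda>n. K * \<bar>v n z - vbar z\<bar>) \<longlonglongrightarrow> 0" by simp
    qed
    have "(\<lambda>n. (A n (v n z) - ybar (v n z)) + (ybar (v n z) - ybar (vbar z)) + ybar (vbar z)) \<longlonglongrightarrow> 0 + 0 + ybar (vbar z)"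
      by (intro tendsto_intros 1 2)
    then show ?thesis by simp
  qed
  have comp: "(\<lambda>n. q (v n z)) \<longlonglongrightarrow> q (vbar z)" if "continuous_on {0..1} q" for q z
    using continuous_on_tendsto_compose[OF that vconv vbar01] vn01 by (simp add: o_def)
  define Gn where "Gn = (\<lambda>n. (A n (v n z1) - c n * v n z1 - h (v n z1) + Fp (v n z1))
                           - (A n (v n z0) - c n * v n z0 - h (v n z0) + Fp (v n z0)))"
  have Gn0: "Gn \<longlonglongrightarrow> 0"
  proof (rule Lim_null_comparison)
    show "\<forall>\<^sub>F n in sequentially. norm (Gn n) \<le> K * ((z1 - z0) - (v n z1 - v n z0))"
      using prof.G_est[OF P, of z0 z1] z01 prof.assoc_at[OF P]
      by (auto simp: Gn_def A_def)
    have "(\<lambda>n. K * ((z1 - z0) - (v n z1 - v n z0))) \<longlonglongrightarrow> K * ((z1 - z0) - (vbar z1 - vbar z0))"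
      by (intro tendsto_intros vconv)
    moreover have "vbar z1 - vbar z0 = z1 - z0" using lin[of z1] lin[of z0] z01 by simp
    ultimately show "(\<lambda>n. K * ((z1 - z0) - (v n z1 - v n z0))) \<longlonglongrightarrow> 0" by simp
  qed
  have GnL: "Gn \<longlonglongrightarrow> (ybar (vbar z1) - cbar * vbar z1 - h (vbar z1) + Fp (vbar z1))
                   - (ybar (vbar z0) - cbar * vbar z0 - h (vbar z0) + Fp (vbar z0))"
    unfolding Gn_def by (intro tendsto_intros Aconv c_lim vconv comp hcont Fcont)
  have L0: "(ybar (vbar z1) - cbar * vbar z1 - h (vbar z1) + Fp (vbar z1))
                   - (ybar (vbar z0) - cbar * vbar z0 - h (vbar z0) + Fp (vbar z0)) = 0"
    using LIMSEQ_unique[OF GnL Gn0] .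
  have vz0: "vbar z0 = v0" using lin[of z0] z01 by simp
  have d: "vbar z1 - v0 = z1 - z0" using lin[of z1] z01 by simp
  have dpos: "vbar z1 - v0 > 0" using d z01 by simp
  have "cbar * (vbar z1 - v0) = (Fp (vbar z1) - Fp v0 - h (vbar z1) + h v0) + (ybar (vbar z1) - ybar v0)"
    using L0 vz0 by (simp add: algebra_simps)
  then have "cbar = ((Fp (vbar z1) - Fp v0 - h (vbar z1) + h v0) + (ybar (vbar z1) - ybar v0)) / (vbar z1 - v0)"
    using dpos by (simp add: eq_divide_eq)
  then show ?thesis unfolding Fp_def by (simp add: add_divide_distrib)
qed
end
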